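(* For every $0<\gamma<\frac12$, the function $m\mapsto F(m,\gamma)$ is strictly convex on the real interval $[2,\infty)$.
   Context: Logarithms base 2. For real $m\ge 2$ and $\gamma\in(0,\frac12)$, $$F(m,\gamma)=\min_{x\in(0,1)}\Big[\log\big((1+x)^m+(1-x)^m\big)-m\gamma\log x-1\Big].$$ *)

theory Defs
  imports "HOL-Analysis.Analysis"
begin

definition strictly_convex_on :: "real set \<Rightarrow> (real \<Rightarrow> real) \<Rightarrow> bool" where
  "strictly_convex_on S f \<longleftrightarrow> convex S \<and>
    (\<forall>x\<in>S. \<forall>y\<in>S. \<forall>u::real. x \<noteq> y \<and> 0 < u \<and> u < 1 \<longrightarrow>
       f (u * x + (1 - u) * y) < u * f x + (1 - u) * f y)"

definition Fobj :: "real \<Rightarrow> real \<Rightarrow> real \<Rightarrow> real" where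
  "Fobj m \<gamma> x = log 2 ((1 + x) powr m + (1 - x) powr m) - m * \<gamma> * log 2 x - 1"

text \<open>F(m,gamma) = min over x in (0,1) of the objective (taken as an infimum).\<close>
definition F :: "real \<Rightarrow> real \<Rightarrow> real" where
  "F m \<gamma> = (INF x\<in>{0<..<1}. Fobj m \<gamma> x)"

end

theory Submission
  imports Defs
begin


lemma exp_sum_nz[simp]: "exp (x::real) + exp y \<noteq> 0"
  by (smt (verit) exp_gt_zero)

lemma e_sq: "(0::real) < y \<Longrightarrow> y^2 = exp (2 * ln y)"
proof -
  assume y: "0 < y"
  have "exp (2 * ln y) = exp (ln y) * exp (ln y)" by (simp only: mult_2 exp_add)
  also have "\<dots> = y * y" by (simp only: exp_ln[OF y])
  finally show ?thesis by (simp only: power2_eq_square)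
qed


definition hx :: "real \<Rightarrow> real \<Rightarrow> real \<Rightarrow> real" where
 "hx m g x = ln (exp (m * ln (1+x)) + exp (m * ln (1-x))) - m*g*ln x"

lemma hx_deriv:
  assumes "0<x" "x<1"
  shows "(hx m g has_real_derivative
     (exp (m * ln (1+x)) * (m/(1+x)) - exp (m * ln (1-x)) * (m/(1-x))) / (exp (m * ln (1+x)) + exp (m * ln (1-x))) - m*g/x) (at x)"
  unfolding hx_def using assms
  by (auto intro!: derivative_eq_intros add_pos_pos simp: field_simps)

lemma hx_deriv_pos:
  fixes m g x :: real
  assumes "0<x" "x<1" "2 \<le> m" "0<g" "g*(1+x^2) < x^2"
  shows "0 < (exp (m * ln (1+x)) * (m/(1+x)) - exp (m * ln (1-x)) * (m/(1-x))) / (exp (m * ln (1+x)) + exp (m * ln (1-x))) - m*g/x"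
proof -
  define a where "a = exp (m * ln (1+x))"
  define b where "b = exp (m * ln (1-x))"
  have a0: "a > 0" "b > 0" unfolding a_def b_def by auto
  have "m * ln (1-x) + 2 * ln (1+x) \<le> m * ln (1+x) + 2 * ln (1-x)"
  proof -
    have "ln (1-x) \<le> ln (1+x)" using assms by simp
    hence "(m-2) * ln (1-x) \<le> (m-2) * ln (1+x)" using assms by (intro mult_left_mono) auto
    thus ?thesis by (simp add: algebra_simps)
  qed
  hence "exp (m * ln (1-x) + 2 * ln (1+x)) \<le> exp (m * ln (1+x) + 2 * ln (1-x))" by simp
  hence H: "exp (m * ln (1-x)) * exp (2 * ln (1+x)) \<le> exp (m * ln (1+x)) * exp (2 * ln (1-x))"
    by (simp only: exp_add[symmetric])
  have e1: "(1+x)^2 = exp (2 * ln (1+x))" by (rule e_sq) (use assms in linarith)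
  have e2: "(1-x)^2 = exp (2 * ln (1-x))" by (rule e_sq) (use assms in linarith)
  have "b * (1+x)^2 \<le> a * (1-x)^2"
    unfolding a_def b_def e1 e2 by (rule H)
  have key: "g*(a+b) < x*(a/(1+x) - b/(1-x))"
  proof -
    define A where "A = a/(1+x)"
    define B where "B = b/(1-x)"
    have aA: "a = A*(1+x)" and bB: "b = B*(1-x)" using assms by (simp_all add: A_def B_def)
    have A0: "A > 0" using a0 assms by (simp add: A_def)
    have "(B*(1+x))*((1-x)*(1+x)) \<le> (A*(1-x))*((1-x)*(1+x))"
      using \<open>b * (1+x)^2 \<le> a * (1-x)^2\<close> unfolding aA bB by (simp add: power2_eq_square mult_ac)
    hence AB: "B*(1+x) \<le> A*(1-x)" using assms by (simp add: mult_le_cancel_right)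
    have "B*(1+x)*(x + g*(1-x)) \<le> A*(1-x)*(x + g*(1-x))"
      using AB assms by (intro mult_right_mono) auto
    moreover have "0 < A*(2*(x*x - g*(1+x*x)))" using A0 assms by (simp add: power2_eq_square)
    ultimately have "0 < (1+x)*(A*(x - g*(1+x)) - B*(x + g*(1-x)))"
      by (simp add: algebra_simps)
    hence "0 < A*(x - g*(1+x)) - B*(x + g*(1-x))" using assms by (simp add: zero_less_mult_iff)
    moreover have "x*(a/(1+x) - b/(1-x)) - g*(a+b) = A*(x - g*(1+x)) - B*(x + g*(1-x))"
    proof -
      have "x*(a/(1+x) - b/(1-x)) = x*(A - B)" by (simp add: A_def B_def)
      thus ?thesis by (simp add: aA bB algebra_simps)
    qed
    ultimately show ?thesis by linarith
  qed
  have "g/x < (a/(1+x) - b/(1-x))/(a+b)"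
  proof -
    define D where "D = a/(1+x) - b/(1-x)"
    have "g*(a+b) < x*D" using key unfolding D_def .
    moreover have "0 < a+b" using a0 by simp
    ultimately have "g/x < D/(a+b)" using assms by (simp add: field_simps)
    thus ?thesis unfolding D_def .
  qed
  hence "m*(g/x) < m*((a/(1+x) - b/(1-x))/(a+b))" using assms by (intro mult_strict_left_mono) auto
  moreover have "a*(m/(1+x)) - b*(m/(1-x)) = m*(a/(1+x) - b/(1-x))"
    by (simp add: right_diff_distrib mult_ac)
  ultimately have "m*g/x < (a * (m/(1+x)) - b * (m/(1-x))) / (a+b)" by (simp only: times_divide_eq_right)
  thus ?thesis unfolding a_def b_def by linarith
qed

lemma Fobj_hx: "0<x \<Longrightarrow> x<1 \<Longrightarrow> Fobj m g x = hx m g x / ln 2 - 1"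
  unfolding Fobj_def hx_def log_def powr_def by (simp add: field_simps)

lemma hx_mono:
  fixes m g a b :: real
  assumes "0<a" "a<b" "b<1" "2\<le>m" "0<g" "g*(1+a^2) < a^2" "g<1/2"
  shows "hx m g a < hx m g b"
proof (rule DERIV_pos_imp_increasing[where f="hx m g", OF \<open>a<b\<close>])
  fix x :: real assume x: "a \<le> x" "x \<le> b"
  have x01: "0 < x" "x < 1" using x assms by auto
  have "a^2 \<le> x^2" using x assms by (intro power_mono) auto
  hence "(g-1)*(x^2-a^2) \<le> 0" using assms by (intro mult_nonpos_nonneg) auto
  hence gx: "g*(1+x^2) < x^2" using assms by (simp add: algebra_simps)
  show "\<exists>y. (hx m g has_real_derivative y) (at x) \<and> 0 < y"
    using hx_deriv[OF x01, of m g] hx_deriv_pos[OF x01 assms(4) assms(5) gx] by blast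
qed

lemma min_exists:
  fixes m g :: real
  assumes "2\<le>m" "0<g" "g<1/2"
  shows "\<exists>x0\<in>{0<..<1}. \<forall>x\<in>{0<..<1}. Fobj m g x0 \<le> Fobj m g x"
proof -
  define k where "k = g/(1-g)"
  have k: "0<k" "k<1" using assms by (auto simp: k_def field_simps)
  define c where "c = (1+k)/2"
  have c: "0<c" "c<1" "g*(1+c^2) < c^2"
  proof -
    show "0<c" "c<1" using k by (auto simp: c_def)
    have "0 < (1-k)^2" using k by simp
    hence "k < c^2" by (simp add: c_def power2_eq_square field_simps)
    thus "g*(1+c^2) < c^2" using assms by (simp add: k_def field_simps)
  qed
  define v where "v = Fobj m g c"
  define d where "d = min (c/2) (2 powr (-(\<bar>v\<bar>+2)/(m*g)))"
  have d: "0<d" "d<c" using c by (auto simp: d_def)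
  have small: "Fobj m g x > v" if "0<x" "x\<le>d" for x
  proof -
    have "x \<le> 2 powr (-(\<bar>v\<bar>+2)/(m*g))" using that d_def by auto
    hence "log 2 x \<le> -(\<bar>v\<bar>+2)/(m*g)" using that
      by (simp add: le_powr_iff)
    hence "m*g*log 2 x \<le> -(\<bar>v\<bar>+2)" using assms
      by (simp add: field_simps)
    moreover have "0 \<le> log 2 ((1+x) powr m + (1-x) powr m)"
    proof -
      have h1: "1 \<le> (1+x) powr m" using that assms by (intro ge_one_powr_ge_zero) auto
      have h2: "0 \<le> (1-x) powr m" by simp
      show ?thesis using h1 h2 by (subst zero_le_log_cancel_iff) linarith+
    qed
    ultimately show ?thesis unfolding Fobj_def by linarith
  qed
  have cont: "continuous_on {d..c} (Fobj m g)"
  proof -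
    have "continuous_on {d..c} (\<lambda>x. hx m g x / ln 2 - 1)"
      unfolding hx_def using d c
      by (intro continuous_intros) (auto simp: add_pos_pos)
    moreover have "\<And>x. x\<in>{d..c} \<Longrightarrow> hx m g x / ln 2 - 1 = Fobj m g x"
      using d c by (subst Fobj_hx) auto
    ultimately show ?thesis by (rule continuous_on_eq)
  qed
  obtain x0 where x0: "x0 \<in> {d..c}" "\<forall>y\<in>{d..c}. Fobj m g x0 \<le> Fobj m g y"
    using continuous_attains_inf[OF compact_Icc _ cont] d by auto
  have "Fobj m g x0 \<le> v" using x0 d unfolding v_def by auto
  show ?thesis
  proof (intro bexI ballI)
    show "x0 \<in> {0<..<1}" using x0 d c by auto
    fix x :: real assume x: "x \<in> {0<..<1}"
    show "Fobj m g x0 \<le> Fobj m g x"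
    proof (cases "x \<le> d")
      case True
      have "Fobj m g x > v" using small[of x] x True by auto
      thus ?thesis using \<open>Fobj m g x0 \<le> v\<close> by linarith
    next
      case False
      show ?thesis
      proof (cases "x \<le> c")
        case True thus ?thesis using x0 False by auto
      next
        case False
        have "hx m g c < hx m g x" using hx_mono[of c x m g] c x False assms by auto
        hence "v \<le> Fobj m g x" unfolding v_def using c x by (simp add: Fobj_hx divide_right_mono)
        thus ?thesis using \<open>Fobj m g x0 \<le> v\<close> by auto
      qed
    qed
  qed
qed



definition sig :: "real \<Rightarrow> real" where "sig s = exp s/(1+exp s)"
definition rho :: "real \<Rightarrow> real" where "rho s = exp s/(1-exp s)"

definition Lf :: "real \<Rightarrow> real" where "Lf s = ln (1 + exp s)"
definition L2f :: "real \<Rightarrow> real" where "L2f s = ln (1 - exp s)"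

lemma exp1_nz[simp]: "1 + exp (s::real) \<noteq> 0" "exp s + 1 \<noteq> 0"
  by (smt (verit) exp_gt_zero)+

lemma sig_deriv: "(sig has_real_derivative sig s * (1 - sig s)) (at s)"
  unfolding sig_def[abs_def]
  by (auto intro!: derivative_eq_intros simp: field_simps power2_eq_square)

lemma rho_deriv: "s < 0 \<Longrightarrow> (rho has_real_derivative rho s * (1 + rho s)) (at s)"
  unfolding rho_def[abs_def]
  by (auto intro!: derivative_eq_intros simp: field_simps power2_eq_square)

lemma L_deriv: "(Lf has_real_derivative sig s) (at s)"
  unfolding sig_def Lf_def[abs_def]
  by (auto intro!: derivative_eq_intros add_pos_pos simp: field_simps)

lemma L2_deriv: "s < 0 \<Longrightarrow> (L2f has_real_derivative - rho s) (at s)"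
  unfolding rho_def L2f_def[abs_def]
  by (auto intro!: derivative_eq_intros simp: field_simps)

lemma sig_chain:
  "(f has_real_derivative f') (at x within S) \<Longrightarrow>
   ((\<lambda>x. sig (f x)) has_real_derivative sig (f x) * (1 - sig (f x)) * f') (at x within S)"
  by (rule DERIV_chain2[OF sig_deriv])
lemma rho_chain:
  "f x < 0 \<Longrightarrow> (f has_real_derivative f') (at x within S) \<Longrightarrow>
   ((\<lambda>x. rho (f x)) has_real_derivative rho (f x) * (1 + rho (f x)) * f') (at x within S)"
  by (rule DERIV_chain2[OF rho_deriv])
lemma L_chain:
  "(f has_real_derivative f') (at x within S) \<Longrightarrow>
   ((\<lambda>x. Lf (f x)) has_real_derivative sig (f x) * f') (at x within S)"
  by (rule DERIV_chain2[OF L_deriv])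
lemma L2_chain:
  "f x < 0 \<Longrightarrow> (f has_real_derivative f') (at x within S) \<Longrightarrow>
   ((\<lambda>x. L2f (f x)) has_real_derivative - rho (f x) * f') (at x within S)"
  by (rule DERIV_chain2[OF L2_deriv])

definition Mf :: "real \<Rightarrow> real \<Rightarrow> real \<Rightarrow> real" where "Mf m1 a \<tau> = m1 + \<tau>*a"

lemma Mf_deriv: "(Mf m1 a has_real_derivative a) (at x)"
  unfolding Mf_def[abs_def] by (auto intro!: derivative_eq_intros)

definition tt :: "real \<Rightarrow> real \<Rightarrow> real \<Rightarrow> real \<Rightarrow> real \<Rightarrow> real" where
  "tt m1 a V1 b \<tau> = (V1+\<tau>*b)/(m1+\<tau>*a)"
definition PP where "PP m1 a V1 b \<tau> = Mf m1 a \<tau> * Lf (tt m1 a V1 b \<tau>)"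
definition QQ where "QQ m1 a V1 b \<tau> = Mf m1 a \<tau> * L2f (tt m1 a V1 b \<tau>)"
definition P1 where "P1 m1 a V1 b \<tau> = (let t = tt m1 a V1 b \<tau> in
   a*(Lf t - t* sig t) + b* sig t)"
definition Q1 where "Q1 m1 a V1 b \<tau> = (let t = tt m1 a V1 b \<tau> in
   a*(L2f t + t* rho t) - b* rho t)"
definition P2 where "P2 m1 a V1 b \<tau> = (let t = tt m1 a V1 b \<tau> in
   sig t * (1 - sig t) * ((b - a*t)*(b - a*t)) / Mf m1 a \<tau>)"
definition Q2 where "Q2 m1 a V1 b \<tau> = (let t = tt m1 a V1 b \<tau> in
   - (rho t * (1 + rho t) * ((b - a*t)*(b - a*t)) / Mf m1 a \<tau>))"

lemma tt_deriv:
  assumes "m1+\<tau>*a > 0"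
  shows "(tt m1 a V1 b has_real_derivative (b - a*tt m1 a V1 b \<tau>)/Mf m1 a \<tau>) (at \<tau>)"
  unfolding tt_def Mf_def using assms
  by (auto intro!: derivative_eq_intros simp: field_simps power2_eq_square)

lemma tt_neg: "m1+\<tau>*a > 0 \<Longrightarrow> V1+\<tau>*b < 0 \<Longrightarrow> tt m1 a V1 b \<tau> < 0"
  unfolding tt_def by (simp add: divide_neg_pos)

lemma PP_deriv:
  assumes "m1+\<tau>*a > 0" "V1+\<tau>*b < 0"
  shows "(PP m1 a V1 b has_real_derivative P1 m1 a V1 b \<tau>) (at \<tau>)"
proof -
  have nz: "Mf m1 a \<tau> \<noteq> 0" using assms by (auto simp: Mf_def)
  show ?thesis unfolding PP_def[abs_def] P1_def Let_def
    using nz by (auto intro!: derivative_eq_intros L_chain tt_deriv Mf_deriv assms simp: field_simps)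
qed

lemma QQ_deriv:
  assumes "m1+\<tau>*a > 0" "V1+\<tau>*b < 0"
  shows "(QQ m1 a V1 b has_real_derivative Q1 m1 a V1 b \<tau>) (at \<tau>)"
proof -
  have nz: "Mf m1 a \<tau> \<noteq> 0" using assms by (auto simp: Mf_def)
  note t = tt_neg[OF assms]
  show ?thesis unfolding QQ_def[abs_def] Q1_def Let_def
    using nz by (auto intro!: derivative_eq_intros L2_chain[where f="tt m1 a V1 b", OF t] tt_deriv Mf_deriv assms simp: field_simps)
qed

lemma P1_deriv:
  assumes "m1+\<tau>*a > 0" "V1+\<tau>*b < 0"
  shows "(P1 m1 a V1 b has_real_derivative P2 m1 a V1 b \<tau>) (at \<tau>)"
proof -
  have nz: "Mf m1 a \<tau> \<noteq> 0" using assms by (auto simp: Mf_def)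
  show ?thesis unfolding P1_def[abs_def] P2_def Let_def
    using nz by (auto intro!: derivative_eq_intros L_chain sig_chain tt_deriv Mf_deriv assms simp: field_simps)
qed

lemma Q1_deriv:
  assumes "m1+\<tau>*a > 0" "V1+\<tau>*b < 0"
  shows "(Q1 m1 a V1 b has_real_derivative Q2 m1 a V1 b \<tau>) (at \<tau>)"
proof -
  have nz: "Mf m1 a \<tau> \<noteq> 0" using assms by (auto simp: Mf_def)
  note t = tt_neg[OF assms]
  show ?thesis unfolding Q1_def[abs_def] Q2_def Let_def
    using nz by (auto intro!: derivative_eq_intros L2_chain[where f="tt m1 a V1 b", OF t]
        rho_chain[where f="tt m1 a V1 b", OF t] tt_deriv Mf_deriv assms simp: field_simps)
qed

lemma key_ineq:
  fixes x M :: real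
  assumes "0<x" "x<1" "2 < M"
  shows "exp (M * ln (1-x)) * (1+x)^2 < exp (M * ln (1+x)) * (1-x)^2"
proof -
  have "ln (1-x) < ln (1+x)" using assms by simp
  hence "(M-2) * ln (1-x) < (M-2) * ln (1+x)" using assms by (intro mult_strict_left_mono) auto
  hence "M * ln (1-x) + 2 * ln (1+x) < M * ln (1+x) + 2 * ln (1-x)" by (simp add: algebra_simps)
  hence "exp (M * ln (1-x) + 2 * ln (1+x)) < exp (M * ln (1+x) + 2 * ln (1-x))" by simp
  hence H: "exp (M * ln (1-x)) * exp (2 * ln (1+x)) < exp (M * ln (1+x)) * exp (2 * ln (1-x))"
    by (simp only: exp_add[symmetric])
  have e1: "(1+x)^2 = exp (2 * ln (1+x))" by (rule e_sq) (use assms in linarith)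
  have e2: "(1-x)^2 = exp (2 * ln (1-x))" by (rule e_sq) (use assms in linarith)
  show ?thesis unfolding e1 e2 by (rule H)
qed

lemma second_pos:
  fixes eP eQ P1 Q1 P2 Q2 S N N' :: real
  assumes "eP > 0" "eQ > 0" "S = eP + eQ" "N = eP*P1 + eQ*Q1" "N' = eP*(P1*P1+P2) + eQ*(Q1*Q1+Q2)"
    "eP*P2 + eQ*Q2 \<ge> 0" "eP*P2 + eQ*Q2 > 0 \<or> P1 \<noteq> Q1"
  shows "N'*S - N*N > 0"
proof -
  have "N'*S - N*N = S*(eP*P2 + eQ*Q2) + eP*eQ*((P1-Q1)*(P1-Q1))"
    using assms by (simp add: algebra_simps)
  moreover have "S > 0" using assms by simp
  moreover have "(P1-Q1)*(P1-Q1) \<ge> 0" by simp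
  moreover have "P1 \<noteq> Q1 \<Longrightarrow> (P1-Q1)*(P1-Q1) > 0" by (auto simp: zero_less_mult_iff)
  ultimately show ?thesis using assms
    by (smt (verit) mult_pos_pos mult_nonneg_nonneg)
qed

lemma PQ2_comb:
  assumes M: "Mf m1 a \<tau> > 2" and V: "V1+\<tau>*b < 0" and a: "a \<noteq> 0"
  shows "exp (PP m1 a V1 b \<tau>) * P2 m1 a V1 b \<tau> + exp (QQ m1 a V1 b \<tau>) * Q2 m1 a V1 b \<tau> \<ge> 0"
    "exp (PP m1 a V1 b \<tau>) * P2 m1 a V1 b \<tau> + exp (QQ m1 a V1 b \<tau>) * Q2 m1 a V1 b \<tau> > 0
     \<or> P1 m1 a V1 b \<tau> \<noteq> Q1 m1 a V1 b \<tau>"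
proof -
  define t where "t = tt m1 a V1 b \<tau>"
  define E where "E = exp t"
  define Mv where "Mv = Mf m1 a \<tau>"
  define z where "z = b - a*t"
  have Mp: "m1 + \<tau>*a > 0" using M by (simp add: Mf_def)
  have tn: "t < 0" unfolding t_def using tt_neg[OF Mp V] .
  have E: "0 < E" "E < 1" using tn by (auto simp: E_def)
  have ePv: "exp (PP m1 a V1 b \<tau>) = exp (Mv * ln (1+E))"
    unfolding PP_def Lf_def Mv_def E_def t_def by simp
  have eQv: "exp (QQ m1 a V1 b \<tau>) = exp (Mv * ln (1-E))"
    unfolding QQ_def L2f_def Mv_def E_def t_def by simp
  have s1: "sig t * (1 - sig t) = E / ((1+E)^2)" unfolding sig_def E_def
    by (simp add: field_simps power2_eq_square)
  have rE: "rho t = E/(1-E)" unfolding rho_def E_def ..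
  have r1: "rho t * (1 + rho t) = E / ((1-E)^2)" unfolding rE using E
    by (simp add: field_simps power2_eq_square)
  have Mvp: "Mv > 2" using M Mv_def by simp
  have comb: "exp (PP m1 a V1 b \<tau>) * P2 m1 a V1 b \<tau> + exp (QQ m1 a V1 b \<tau>) * Q2 m1 a V1 b \<tau>
     = (z*z/Mv) * E * (exp (Mv * ln (1+E)) / (1+E)^2 - exp (Mv * ln (1-E)) / (1-E)^2)"
    unfolding ePv eQv P2_def Q2_def Let_def t_def[symmetric] s1 r1 z_def[symmetric] Mv_def[symmetric]
    using Mvp E by (simp add: field_simps)
  have gap: "exp (Mv * ln (1-E)) / (1-E)^2 < exp (Mv * ln (1+E)) / (1+E)^2"
    using key_ineq[OF E Mvp] E by (simp add: field_simps)
  have zz: "z*z/Mv \<ge> 0" using Mvp by simp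
  show "exp (PP m1 a V1 b \<tau>) * P2 m1 a V1 b \<tau> + exp (QQ m1 a V1 b \<tau>) * Q2 m1 a V1 b \<tau> \<ge> 0"
    unfolding comb using zz gap E by (intro mult_nonneg_nonneg) auto
  show "exp (PP m1 a V1 b \<tau>) * P2 m1 a V1 b \<tau> + exp (QQ m1 a V1 b \<tau>) * Q2 m1 a V1 b \<tau> > 0
     \<or> P1 m1 a V1 b \<tau> \<noteq> Q1 m1 a V1 b \<tau>"
  proof (cases "z = 0")
    case False
    have "z*z > 0" using False by (auto simp: zero_less_mult_iff)
    hence "z*z/Mv > 0" using Mvp by (intro divide_pos_pos) auto
    hence "exp (PP m1 a V1 b \<tau>) * P2 m1 a V1 b \<tau> + exp (QQ m1 a V1 b \<tau>) * Q2 m1 a V1 b \<tau> > 0"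
      unfolding comb using gap E by (intro mult_pos_pos) auto
    thus ?thesis by blast
  next
    case True
    hence b: "b = a*t" unfolding z_def by simp
    have "P1 m1 a V1 b \<tau> = a * ln (1+E)" unfolding P1_def Let_def t_def[symmetric] Lf_def E_def
      using b by (simp add: algebra_simps)
    moreover have "Q1 m1 a V1 b \<tau> = a * ln (1-E)" unfolding Q1_def Let_def t_def[symmetric] L2f_def E_def
      using b by (simp add: algebra_simps)
    moreover have "ln (1-E) < ln (1+E)" using E by simp
    ultimately show ?thesis using a by auto
  qed
qed

definition phi where "phi m1 a V1 b \<tau> = ln (exp (PP m1 a V1 b \<tau>) + exp (QQ m1 a V1 b \<tau>))"
definition Phi1 where "Phi1 m1 a V1 b \<tau> =
  (exp (PP m1 a V1 b \<tau>) * P1 m1 a V1 b \<tau> + exp (QQ m1 a V1 b \<tau>) * Q1 m1 a V1 b \<tau>) /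
  (exp (PP m1 a V1 b \<tau>) + exp (QQ m1 a V1 b \<tau>))"
definition Phi2 where "Phi2 m1 a V1 b \<tau> = (let eP = exp (PP m1 a V1 b \<tau>); eQ = exp (QQ m1 a V1 b \<tau>);
   p1 = P1 m1 a V1 b \<tau>; q1 = Q1 m1 a V1 b \<tau>; S = eP + eQ; N = eP*p1 + eQ*q1 in
   ((eP*(p1*p1 + P2 m1 a V1 b \<tau>) + eQ*(q1*q1 + Q2 m1 a V1 b \<tau>))*S - N*N)/(S*S))"

lemma phi_deriv:
  assumes "m1+\<tau>*a > 0" "V1+\<tau>*b < 0"
  shows "(phi m1 a V1 b has_real_derivative Phi1 m1 a V1 b \<tau>) (at \<tau>)"
  unfolding phi_def[abs_def] Phi1_def
  by (auto intro!: derivative_eq_intros PP_deriv QQ_deriv assms add_pos_pos simp: field_simps)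

lemma Phi1_deriv:
  assumes "m1+\<tau>*a > 0" "V1+\<tau>*b < 0"
  shows "(Phi1 m1 a V1 b has_real_derivative Phi2 m1 a V1 b \<tau>) (at \<tau>)"
proof -
  have nz: "exp (PP m1 a V1 b \<tau>) + exp (QQ m1 a V1 b \<tau>) \<noteq> 0" by (smt (verit) exp_gt_zero)
  show ?thesis unfolding Phi1_def[abs_def] Phi2_def Let_def
  by (rule DERIV_cong, (rule derivative_eq_intros PP_deriv QQ_deriv P1_deriv Q1_deriv assms refl nz)+)
     (use nz in \<open>simp add: field_simps\<close>)
qed

lemma Phi2_pos:
  assumes M: "Mf m1 a \<tau> > 2" and V: "V1+\<tau>*b < 0" and a: "a \<noteq> 0"
  shows "Phi2 m1 a V1 b \<tau> > 0"
proof -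
  note c = PQ2_comb[OF M V a]
  have "((exp (PP m1 a V1 b \<tau>) * (P1 m1 a V1 b \<tau> * P1 m1 a V1 b \<tau> + P2 m1 a V1 b \<tau>) +
         exp (QQ m1 a V1 b \<tau>) * (Q1 m1 a V1 b \<tau> * Q1 m1 a V1 b \<tau> + Q2 m1 a V1 b \<tau>)) *
        (exp (PP m1 a V1 b \<tau>) + exp (QQ m1 a V1 b \<tau>)) -
        (exp (PP m1 a V1 b \<tau>) * P1 m1 a V1 b \<tau> + exp (QQ m1 a V1 b \<tau>) * Q1 m1 a V1 b \<tau>) *
        (exp (PP m1 a V1 b \<tau>) * P1 m1 a V1 b \<tau> + exp (QQ m1 a V1 b \<tau>) * Q1 m1 a V1 b \<tau>)) > 0"
    by (rule second_pos[OF exp_gt_zero exp_gt_zero refl refl refl c])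
  moreover have "(exp (PP m1 a V1 b \<tau>) + exp (QQ m1 a V1 b \<tau>)) * (exp (PP m1 a V1 b \<tau>) + exp (QQ m1 a V1 b \<tau>)) > 0"
    by (intro mult_pos_pos add_pos_pos) auto
  ultimately show ?thesis unfolding Phi2_def Let_def by (rule divide_pos_pos)
qed

lemma phi_strict:
  assumes m1: "m1 \<ge> 2" and m2: "m1 + a \<ge> 2" and a: "a \<noteq> 0"
    and V1: "V1 < 0" and V2: "V1 + b < 0" and c: "0 < c" "c < 1"
  shows "phi m1 a V1 b c < (1-c) * phi m1 a V1 b 0 + c * phi m1 a V1 b 1"
proof -
  have rng: "m1 + \<tau>*a > 0 \<and> V1 + \<tau>*b < 0" if "0 \<le> \<tau>" "\<tau> \<le> 1" for \<tau>
  proof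
    have "m1 + \<tau>*a = (1-\<tau>)*m1 + \<tau>*(m1+a)" by (simp add: algebra_simps)
    moreover have "(1-\<tau>)*m1 \<ge> (1-\<tau>)*2" using that m1 by (intro mult_left_mono) auto
    moreover have "\<tau>*(m1+a) \<ge> \<tau>*2" using that m2 by (intro mult_left_mono) auto
    ultimately have "m1 + \<tau>*a \<ge> (1-\<tau>)*2 + \<tau>*2" by linarith
    thus "m1 + \<tau>*a > 0" by (simp add: algebra_simps)
    have e: "V1 + \<tau>*b = (1-\<tau>)*V1 + \<tau>*(V1+b)" by (simp add: algebra_simps)
    show "V1 + \<tau>*b < 0"
    proof (cases "\<tau> = 0")
      case True thus ?thesis using V1 by simp
    next
      case False
      hence "\<tau>*(V1+b) < 0" using that V2 by (intro mult_pos_neg) auto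
      moreover have "(1-\<tau>)*V1 \<le> 0" using that V1 by (intro mult_nonneg_nonpos) auto
      ultimately show ?thesis using e by linarith
    qed
  qed
  have inner: "Mf m1 a \<tau> > 2" if "0 < \<tau>" "\<tau> < 1" for \<tau>
  proof -
    have e: "Mf m1 a \<tau> - 2 = (1-\<tau>)*(m1-2) + \<tau>*(m1+a-2)" by (simp add: Mf_def algebra_simps)
    show ?thesis
    proof (cases "m1 = 2")
      case True
      hence "a > 0" using a m2 by auto
      hence "\<tau>*(m1+a-2) > 0" using that True by simp
      thus ?thesis using e True by simp
    next
      case False
      hence "(1-\<tau>)*(m1-2) > 0" using that m1 by (intro mult_pos_pos) auto
      moreover have "\<tau>*(m1+a-2) \<ge> 0" using that m2 by simp
      ultimately show ?thesis using e by linarith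
    qed
  qed
  have D: "(phi m1 a V1 b has_real_derivative Phi1 m1 a V1 b x) (at x)" if "0 \<le> x" "x \<le> 1" for x
    using rng[OF that] phi_deriv by blast
  obtain z1 where z1: "0 < z1" "z1 < c" "phi m1 a V1 b c - phi m1 a V1 b 0 = (c - 0) * Phi1 m1 a V1 b z1"
    using MVT2[of 0 c "phi m1 a V1 b" "Phi1 m1 a V1 b"] c D by auto
  obtain z2 where z2: "c < z2" "z2 < 1" "phi m1 a V1 b 1 - phi m1 a V1 b c = (1 - c) * Phi1 m1 a V1 b z2"
    using MVT2[of c 1 "phi m1 a V1 b" "Phi1 m1 a V1 b"] c D by auto
  have "Phi1 m1 a V1 b z1 < Phi1 m1 a V1 b z2"
  proof (rule DERIV_pos_imp_increasing[where f="Phi1 m1 a V1 b"])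
    show "z1 < z2" using z1 z2 by simp
    fix x assume x: "z1 \<le> x" "x \<le> z2"
    hence x01: "0 < x" "x < 1" using z1 z2 by auto
    show "\<exists>y. (Phi1 m1 a V1 b has_real_derivative y) (at x) \<and> 0 < y"
      using Phi1_deriv[of m1 x a V1 b] rng[of x] x01 Phi2_pos[OF inner[OF x01] _ a, of V1 b] by auto
  qed
  hence "0 < (1-c)*(c*(Phi1 m1 a V1 b z2 - Phi1 m1 a V1 b z1))" using c by (intro mult_pos_pos) auto
  moreover have "(1-c) * phi m1 a V1 b 0 + c * phi m1 a V1 b 1 - phi m1 a V1 b c
      = (1-c)*(c*(Phi1 m1 a V1 b z2 - Phi1 m1 a V1 b z1))"
  proof -
    have e1: "phi m1 a V1 b c = phi m1 a V1 b 0 + c * Phi1 m1 a V1 b z1" using z1 by simp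
    have e2: "phi m1 a V1 b 1 = phi m1 a V1 b 0 + c * Phi1 m1 a V1 b z1 + (1 - c) * Phi1 m1 a V1 b z2"
      using z2 e1 by simp
    show ?thesis unfolding e2 e1 by (simp add: algebra_simps)
  qed
  ultimately show ?thesis by linarith
qed




lemma Fobj_phi:
  assumes "Mf m1 a \<tau> > 0" "V1 + \<tau>*b < 0"
  shows "Fobj (Mf m1 a \<tau>) g (exp (tt m1 a V1 b \<tau>)) = (phi m1 a V1 b \<tau> - g*(V1+\<tau>*b))/ln 2 - 1"
proof -
  have Mp: "m1 + \<tau>*a > 0" using assms by (simp add: Mf_def)
  have tn: "tt m1 a V1 b \<tau> < 0" using tt_neg[OF Mp assms(2)] .
  have x: "0 < exp (tt m1 a V1 b \<tau>)" "exp (tt m1 a V1 b \<tau>) < 1" using tn by auto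
  have "Mf m1 a \<tau> * tt m1 a V1 b \<tau> = V1 + \<tau>*b" using assms by (simp add: Mf_def tt_def)
  thus ?thesis
    unfolding Fobj_hx[OF x] hx_def phi_def PP_def QQ_def Lf_def L2f_def
    by (simp add: mult_ac)
qed

lemma F_min:
  assumes "x0 \<in> {0<..<1}" "\<forall>x\<in>{0<..<1}. Fobj m g x0 \<le> Fobj m g x"
  shows "F m g = Fobj m g x0"
  unfolding F_def using assms by (intro cInf_eq_minimum) auto

theorem mainTheorem16:
  fixes \<gamma> :: real
  assumes "0 < \<gamma>" and "\<gamma> < 1/2"
  shows "strictly_convex_on {2..} (\<lambda>m. F m \<gamma>)"
  unfolding strictly_convex_on_def
proof (intro conjI ballI allI impI)
  show "convex {2::real..}" by (rule convex_real_interval)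
  fix m1 m2 u :: real
  assume m1: "m1 \<in> {2..}" and m2: "m2 \<in> {2..}" and h: "m1 \<noteq> m2 \<and> 0 < u \<and> u < 1"
  have m1': "2 \<le> m1" and m2': "2 \<le> m2" using m1 m2 by auto
  obtain x1 where x1: "x1 \<in> {0<..<1}" "\<forall>x\<in>{0<..<1}. Fobj m1 \<gamma> x1 \<le> Fobj m1 \<gamma> x"
    using min_exists[OF m1' assms] by blast
  obtain x2 where x2: "x2 \<in> {0<..<1}" "\<forall>x\<in>{0<..<1}. Fobj m2 \<gamma> x2 \<le> Fobj m2 \<gamma> x"
    using min_exists[OF m2' assms] by blast
  define a where "a = m2 - m1"
  define V1 where "V1 = m1 * ln x1"
  define V2 where "V2 = m2 * ln x2"
  define b where "b = V2 - V1"
  define c where "c = 1 - u"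
  have V1n: "V1 < 0" unfolding V1_def using x1 m1' by (intro mult_pos_neg) auto
  have V2n: "V2 < 0" unfolding V2_def using x2 m2' by (intro mult_pos_neg) auto
  have c: "0 < c" "c < 1" using h by (auto simp: c_def)
  have a0: "a \<noteq> 0" using h by (auto simp: a_def)
  have strict: "phi m1 a V1 b c < (1-c) * phi m1 a V1 b 0 + c * phi m1 a V1 b 1"
    by (rule phi_strict) (use m1' m2' a0 V1n V2n c in \<open>auto simp: a_def b_def\<close>)
  define m where "m = u*m1 + (1-u)*m2"
  have mM: "Mf m1 a c = m" by (simp add: Mf_def m_def a_def c_def algebra_simps)
  have m2'': "2 \<le> m" unfolding mM[symmetric] Mf_def a_def
  proof -
    have "(1-c)*m1 + c*m2 \<ge> (1-c)*2 + c*2" using c m1' m2'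
      by (intro add_mono mult_left_mono) auto
    thus "2 \<le> m1 + c * (m2 - m1)" by (simp add: algebra_simps)
  qed
  have Vc: "V1 + c*b < 0"
  proof -
    have "V1 + c*b = (1-c)*V1 + c*V2" by (simp add: b_def algebra_simps)
    moreover have "(1-c)*V1 < 0" using c V1n by (intro mult_pos_neg) auto
    moreover have "c*V2 < 0" using c V2n by (intro mult_pos_neg) auto
    ultimately show ?thesis by linarith
  qed
  have E1: "Fobj m \<gamma> (exp (tt m1 a V1 b c)) = (phi m1 a V1 b c - \<gamma>*(V1+c*b))/ln 2 - 1"
    using Fobj_phi[of m1 a c V1 b \<gamma>] mM m2'' Vc by simp
  obtain x0 where x0: "x0 \<in> {0<..<1}" "\<forall>x\<in>{0<..<1}. Fobj m \<gamma> x0 \<le> Fobj m \<gamma> x"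
    using min_exists[OF m2'' assms] by blast
  have xin: "exp (tt m1 a V1 b c) \<in> {0<..<1}"
  proof -
    have "tt m1 a V1 b c < 0" using tt_neg[of m1 c a V1 b] mM m2'' Vc by (simp add: Mf_def)
    thus ?thesis by simp
  qed
  have Fm: "F m \<gamma> \<le> (phi m1 a V1 b c - \<gamma>*(V1+c*b))/ln 2 - 1"
  proof -
    have "Fobj m \<gamma> x0 \<le> Fobj m \<gamma> (exp (tt m1 a V1 b c))" using x0(2) xin by blast
    thus ?thesis using F_min[OF x0] E1 by simp
  qed
  have F1: "F m1 \<gamma> = (phi m1 a V1 b 0 - \<gamma>*V1)/ln 2 - 1"
  proof -
    have "Fobj (Mf m1 a 0) \<gamma> (exp (tt m1 a V1 b 0)) = (phi m1 a V1 b 0 - \<gamma>*(V1+0*b))/ln 2 - 1"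
      using Fobj_phi[of m1 a 0 V1 b \<gamma>] m1' V1n by (simp add: Mf_def)
    moreover have "Mf m1 a 0 = m1" by (simp add: Mf_def)
    moreover have "exp (tt m1 a V1 b 0) = x1" using x1 m1' by (simp add: tt_def V1_def)
    ultimately show ?thesis using F_min[OF x1] by simp
  qed
  have F2: "F m2 \<gamma> = (phi m1 a V1 b 1 - \<gamma>*(V1+1*b))/ln 2 - 1"
  proof -
    have "Mf m1 a 1 = m2" by (simp add: Mf_def a_def)
    moreover have "Fobj (Mf m1 a 1) \<gamma> (exp (tt m1 a V1 b 1)) = (phi m1 a V1 b 1 - \<gamma>*(V1+1*b))/ln 2 - 1"
      using Fobj_phi[of m1 a 1 V1 b \<gamma>] m2' V2n by (simp add: Mf_def a_def b_def)
    moreover have "exp (tt m1 a V1 b 1) = x2" using x2 m2' by (simp add: tt_def V2_def a_def b_def)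
    ultimately show ?thesis using F_min[OF x2] by simp
  qed
  have "u * F m1 \<gamma> + (1-u) * F m2 \<gamma> = ((1-c) * phi m1 a V1 b 0 + c * phi m1 a V1 b 1 - \<gamma>*(V1+c*b))/ln 2 - 1"
    unfolding F1 F2 c_def by (simp add: field_simps)
  moreover have "(phi m1 a V1 b c - \<gamma>*(V1+c*b))/ln 2 < ((1-c) * phi m1 a V1 b 0 + c * phi m1 a V1 b 1 - \<gamma>*(V1+c*b))/ln 2"
    using strict by (intro divide_strict_right_mono) auto
  ultimately show "F (u * m1 + (1 - u) * m2) \<gamma> < u * F m1 \<gamma> + (1 - u) * F m2 \<gamma>"
    using Fm unfolding m_def by linarith
qed


end
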